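(* Let $\mathbb{A}\in\mathbb{C}^{n\times n}$, $\mathbf{f}_1\in\mathbb{C}^n$, and $\mathbf{f}_{i+1}=\mathbb{A}\mathbf{f}_i$ for $i=1,\dots,m$. Assume $\mathbf{X}_m=(\mathbf{f}_1,\dots,\mathbf{f}_m)\in\mathbb{C}^{n\times m}$ has full column rank, and let $\mathcal{K}_m=\operatorname{span}\{\mathbf{f}_1,\dots,\mathbf{f}_m\}$. Let $\mathbf{c}=(c_1,\dots,c_m)^T=\mathbf{X}_m^{\dagger}\mathbf{f}_{m+1}$ (the least squares coefficients) and $\mathbf{r}_{m+1}=\mathbf{f}_{m+1}-\mathbf{X}_m\mathbf{c}$. Let $C_m$ be the $m\times m$ companion matrix with ones on the first subdiagonal, last column equal to $\mathbf{c}$, and zeros elsewhere, so that $\mathbb{A}\mathbf{X}_m=\mathbf{X}_mC_m+\mathbf{r}_{m+1}\mathbf{e}_m^T$ with $\mathbf{e}_m=(0,\dots,0,1)^T$. Assume the eigenvalues $\lambda_1,\dots,\lambda_m$ of $C_m$ are pairwise distinct, and let $\mathbb{V}_m=(\lambda_i^{j-1})_{i,j=1}^m$ be the corresponding Vandermonde matrix. Then the columns of $\widehat{W}_m=\mathbf{X}_m\mathbb{V}_m^{-1}$ are Ritz vectors of $\mathbb{A}$ with respect to $\mathcal{K}_m$, the $j$-th column $\widehat{W}_m(:,j)$ having Ritz value $\lambda_j$, and for each $j=1,\dots,m$, $$\frac{\|\mathbb{A}\widehat{W}_m(:,j)-\lambda_j\widehat{W}_m(:,j)\|_2}{\|\widehat{W}_m(:,j)\|_2}=\frac{\|\mathbf{r}_{m+1}\|_2}{\|\widehat{W}_m(:,j)\|_2}\prod_{k=1,k\neq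 j}^m\frac{1}{|\lambda_j-\lambda_k|}.$$
   Context: $\mathbf{X}_m^\dagger$ denotes the Moore–Penrose pseudoinverse, so $\mathbf{X}_m^*\mathbf{r}_{m+1}=0$. A pair $(\lambda,w)$ with $0\neq w\in\mathcal{K}_m$ is a Ritz pair (Ritz value $\lambda$, Ritz vector $w$) of $\mathbb{A}$ with respect to $\mathcal{K}_m$ if $\mathbb{A}w-\lambda w$ is orthogonal to $\mathcal{K}_m$, i.e. $\lambda$ is an eigenvalue of the Rayleigh quotient $\mathbf{X}_m^\dagger\mathbb{A}\mathbf{X}_m=C_m$ and $w=\mathbf{X}_m y$ for a corresponding eigenvector $y$. *)

theory Defs
  imports "Jordan_Normal_Form.Jordan_Normal_Form" "Jordan_Normal_Form.Schur_Decomposition"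
    "Jordan_Normal_Form.DL_Rank"
begin

text \<open>Krylov vectors, 0-indexed: krylov A f1 i = A^i f1 is the paper's f_(i+1).\<close>
definition krylov :: "complex mat \<Rightarrow> complex vec \<Rightarrow> nat \<Rightarrow> complex vec" where
  "krylov A f1 i = (A ^\<^sub>m i) *\<^sub>v f1"

definition krylov_mat :: "nat \<Rightarrow> complex mat \<Rightarrow> complex vec \<Rightarrow> nat \<Rightarrow> complex mat" where
  "krylov_mat n A f1 m = mat_of_cols n (map (krylov A f1) [0..<m])"

definition pinv :: "complex mat \<Rightarrow> complex mat" where
  "pinv X = (THE Y. Y \<in> carrier_mat (dim_col X) (dim_row X) \<and>
       X * Y * X = X \<and> Y * X * Y = Y \<and>
       mat_adjoint (X * Y) = X * Y \<and> mat_adjoint (Y * X) = Y * X)"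

definition mat_inv :: "complex mat \<Rightarrow> complex mat" where
  "mat_inv V = (THE B. B \<in> carrier_mat (dim_row V) (dim_row V) \<and> inverts_mat V B \<and> inverts_mat B V)"

definition companion :: "nat \<Rightarrow> complex vec \<Rightarrow> complex mat" where
  "companion m c = mat m m (\<lambda>(i, j). if j = m - 1 then c $ i else if i = j + 1 then 1 else 0)"

definition vandermonde :: "nat \<Rightarrow> (nat \<Rightarrow> complex) \<Rightarrow> complex mat" where
  "vandermonde m lam = mat m m (\<lambda>(i, j). lam i ^ j)"

definition vnorm2 :: "complex vec \<Rightarrow> real" where
  "vnorm2 v = sqrt (\<Sum>i<dim_vec v. (cmod (v $ i))\<^sup>2)"

definition col_space :: "complex mat \<Rightarrow> complex vec set" where
  "col_space X = {X *\<^sub>v y | y. y \<in> carrier_vec (dim_col X)}"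

definition ritz_pair :: "complex mat \<Rightarrow> complex vec set \<Rightarrow> complex \<Rightarrow> complex vec \<Rightarrow> bool" where
  "ritz_pair A K lam w \<longleftrightarrow> w \<in> K \<and> w \<noteq> 0\<^sub>v (dim_vec w) \<and>
     (\<forall>u\<in>K. (A *\<^sub>v w - lam \<cdot>\<^sub>v w) \<bullet>c u = 0)"

end

theory Submission
  imports Defs
begin

lemma adj_dim[simp]: "dim_row (mat_adjoint A) = dim_col A" "dim_col (mat_adjoint A) = dim_row A"
  unfolding mat_adjoint_def by simp_all

lemma adj_carrier: "A \<in> carrier_mat nr nc \<Longrightarrow> mat_adjoint A \<in> carrier_mat nc nr"
  by (metis adj_dim carrier_matD carrier_matI)

lemma adj_index[simp]: assumes "i < dim_col A" "j < dim_row A" shows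
   "mat_adjoint (A :: complex mat) $$ (i,j) = cnj (A $$ (j,i))"
proof -
  have "mat_adjoint A $$ (i,j) = (map conjugate (cols A) ! i) $ j"
    unfolding mat_adjoint_def using assms by (intro mat_of_rows_index) auto
  also have "\<dots> = conjugate (col A i) $ j" using assms by simp
  also have "\<dots> = conjugate (col A i $ j)" using assms by (intro vec_index_conjugate) simp
  also have "\<dots> = cnj (A $$ (j,i))" using assms by (simp add: conjugate_complex_def)
  finally show ?thesis .
qed

lemma adj_mult: assumes "A \<in> carrier_mat nr k" "B \<in> carrier_mat k nc"
  shows "mat_adjoint ((A :: complex mat) * B) = mat_adjoint B * mat_adjoint A"
proof (rule eq_matI)
  fix i j assume ij: "i < dim_row (mat_adjoint B * mat_adjoint A)" "j < dim_col (mat_adjoint B * mat_adjoint A)"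
  hence i: "i < nc" and j: "j < nr" using assms by auto
  have "mat_adjoint (A * B) $$ (i, j) = cnj (\<Sum>l<k. A $$ (j,l) * B $$ (l,i))"
    using assms i j by (simp add: scalar_prod_def atLeast0LessThan)
  also have "\<dots> = (\<Sum>l<k. cnj (B $$ (l,i)) * cnj (A $$ (j,l)))"
    by (simp add: mult.commute)
  also have "\<dots> = (mat_adjoint B * mat_adjoint A) $$ (i, j)"
    using assms i j by (simp add: scalar_prod_def atLeast0LessThan)
  finally show "mat_adjoint (A * B) $$ (i, j) = (mat_adjoint B * mat_adjoint A) $$ (i, j)" .
qed (insert assms, simp_all)

lemma adj_adj: "mat_adjoint (mat_adjoint (A :: complex mat)) = A"
  by (rule eq_matI, simp_all)

lemma adj_one: "mat_adjoint (1\<^sub>m n :: complex mat) = 1\<^sub>m n"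
  by (rule eq_matI, simp_all)

lemma adj_kernel:
  fixes X :: "complex mat"
  assumes X: "X \<in> carrier_mat n m" and v: "v \<in> carrier_vec m"
    and z: "mat_adjoint X *\<^sub>v (X *\<^sub>v v) = 0\<^sub>v m"
  shows "X *\<^sub>v v = 0\<^sub>v n"
proof -
  define u where "u = X *\<^sub>v v"
  have u: "u \<in> carrier_vec n" using X v unfolding u_def by simp
  have ua: "\<And>a. a < n \<Longrightarrow> u $ a = (\<Sum>i<m. X $$ (a,i) * v $ i)"
    using X v unfolding u_def by (simp add: scalar_prod_def atLeast0LessThan)
  have zi: "\<And>i. i < m \<Longrightarrow> (\<Sum>a<n. cnj (X $$ (a,i)) * u $ a) = 0"
  proof -
    fix i assume i: "i < m"
    have "(mat_adjoint X *\<^sub>v u) $ i = 0" using z i unfolding u_def by simp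
    thus "(\<Sum>a<n. cnj (X $$ (a,i)) * u $ a) = 0"
      using X u i by (simp add: scalar_prod_def atLeast0LessThan)
  qed
  have "(\<Sum>a<n. u $ a * cnj (u $ a)) = (\<Sum>a<n. (\<Sum>i<m. X $$ (a,i) * v $ i) * cnj (u $ a))"
    using ua by simp
  also have "\<dots> = (\<Sum>a<n. \<Sum>i<m. X $$ (a,i) * v $ i * cnj (u $ a))"
    by (simp add: sum_distrib_right)
  also have "\<dots> = (\<Sum>i<m. \<Sum>a<n. X $$ (a,i) * v $ i * cnj (u $ a))"
    by (rule sum.swap)
  also have "\<dots> = (\<Sum>i<m. v $ i * cnj (\<Sum>a<n. cnj (X $$ (a,i)) * u $ a))"
    by (simp add: sum_distrib_left mult_ac)
  also have "\<dots> = 0" using zi by simp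
  finally have s0: "(\<Sum>a<n. u $ a * cnj (u $ a)) = 0" .
  have "(\<Sum>a<n. u $ a * cnj (u $ a)) = complex_of_real (\<Sum>a<n. (cmod (u $ a))\<^sup>2)"
    unfolding of_real_sum by (intro sum.cong refl complex_norm_square[symmetric])
  with s0 have "(\<Sum>a<n. (cmod (u $ a))\<^sup>2) = 0" by (metis of_real_eq_0_iff)
  hence "\<forall>a\<in>{..<n}. (cmod (u $ a))\<^sup>2 = 0"
    by (subst sum_nonneg_eq_0_iff[symmetric]) auto
  hence "\<And>a. a < n \<Longrightarrow> u $ a = 0" by simp
  thus ?thesis using u unfolding u_def[symmetric] by (intro eq_vecI) auto
qed

lemma pinv_prop:
  fixes X :: "complex mat"
  assumes X: "X \<in> carrier_mat n m"
    and inj: "\<And>v. v \<in> carrier_vec m \<Longrightarrow> X *\<^sub>v v = 0\<^sub>v n \<Longrightarrow> v = 0\<^sub>v m"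
  shows "pinv X \<in> carrier_mat m n \<and> mat_adjoint X * X * pinv X = mat_adjoint X"
proof -
  define XH where "XH = mat_adjoint X"
  have XH: "XH \<in> carrier_mat m n" unfolding XH_def using X by (rule adj_carrier)
  define G where "G = XH * X"
  have G: "G \<in> carrier_mat m m" unfolding G_def using XH X by simp
  have "det G \<noteq> 0"
  proof
    assume "det G = 0"
    then obtain v where v: "v \<in> carrier_vec m" "v \<noteq> 0\<^sub>v m" "G *\<^sub>v v = 0\<^sub>v m"
      using det_0_iff_vec_prod_zero_field[OF G] by blast
    have "XH *\<^sub>v (X *\<^sub>v v) = 0\<^sub>v m" using v XH X unfolding G_def
      by (metis assoc_mult_mat_vec)
    hence "X *\<^sub>v v = 0\<^sub>v n" using adj_kernel[OF X v(1)] unfolding XH_def by simp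
    thus False using inj v by blast
  qed
  from det_non_zero_imp_unit[OF G this, of "()"]
  obtain Gi where Gi: "Gi \<in> carrier_mat m m" and GiG: "Gi * G = 1\<^sub>m m" and GGi: "G * Gi = 1\<^sub>m m"
    unfolding Units_def ring_mat_def by auto
  have GH: "mat_adjoint G = G" unfolding G_def XH_def
    using adj_mult[OF adj_carrier[OF X] X] adj_adj by simp
  have "mat_adjoint Gi * G = 1\<^sub>m m"
    using adj_mult[OF G Gi] GGi GH adj_one by simp
  hence GiH: "mat_adjoint Gi = Gi"
    by (metis GGi Gi G adj_carrier assoc_mult_mat left_mult_one_mat right_mult_one_mat)
  define Y where "Y = Gi * XH"
  have Y: "Y \<in> carrier_mat m n" unfolding Y_def using Gi XH by simp
  have YX: "Y * X = 1\<^sub>m m" unfolding Y_def G_def[symmetric]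
    using assoc_mult_mat[OF Gi XH X] GiG unfolding G_def by simp
  have P1: "X * Y * X = X" using assoc_mult_mat[OF X Y X] YX X by simp
  have P2: "Y * X * Y = Y" using YX Y by simp
  have P3: "mat_adjoint (X * Y) = X * Y"
  proof -
    have "mat_adjoint (X * Y) = mat_adjoint Y * XH" unfolding XH_def using adj_mult[OF X Y] .
    also have "mat_adjoint Y = mat_adjoint XH * mat_adjoint Gi" unfolding Y_def using adj_mult[OF Gi XH] .
    also have "\<dots> = X * Gi" unfolding XH_def GiH adj_adj ..
    finally show ?thesis unfolding Y_def using X Gi XH by (simp add: assoc_mult_mat)
  qed
  have P4: "mat_adjoint (Y * X) = Y * X" unfolding YX adj_one ..
  have uniq: "Z = Y" if Z: "Z \<in> carrier_mat m n" and Z1: "X * Z * X = X" and Z3: "mat_adjoint (X * Z) = X * Z" for Z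
  proof -
    have "XH = mat_adjoint (X * Z * X)" unfolding Z1 XH_def ..
    also have "\<dots> = XH * mat_adjoint (X * Z)" unfolding XH_def
      using adj_mult[of "X * Z" n n X m] X Z by simp
    also have "\<dots> = G * Z" unfolding Z3 G_def using XH X Z by (simp add: assoc_mult_mat)
    finally have "Gi * XH = Gi * G * Z" using Gi G Z by (simp add: assoc_mult_mat)
    thus "Z = Y" unfolding Y_def GiG using Z by simp
  qed
  have "pinv X = Y" unfolding pinv_def
  proof (rule the_equality)
    show "Y \<in> carrier_mat (dim_col X) (dim_row X) \<and> X * Y * X = X \<and> Y * X * Y = Y \<and>
        mat_adjoint (X * Y) = X * Y \<and> mat_adjoint (Y * X) = Y * X"
      using X Y P1 P2 P3 P4 by simp
    fix Z assume "Z \<in> carrier_mat (dim_col X) (dim_row X) \<and> X * Z * X = X \<and> Z * X * Z = Z \<and>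
        mat_adjoint (X * Z) = X * Z \<and> mat_adjoint (Z * X) = Z * X"
    thus "Z = Y" using uniq X by auto
  qed
  moreover have "XH * X * Y = XH" unfolding Y_def using GGi XH G Gi unfolding G_def[symmetric]
    by (metis assoc_mult_mat left_mult_one_mat)
  ultimately show ?thesis using Y unfolding XH_def by simp
qed

lemma (in vec_space) rank_inj:
  assumes X: "X \<in> carrier_mat n nc" and r: "rank X = nc"
    and v: "v \<in> carrier_vec nc" and z: "X *\<^sub>v v = 0\<^sub>v n"
  shows "v = 0\<^sub>v nc"
proof (rule ccontr)
  assume v0: "v \<noteq> 0\<^sub>v nc"
  have d: "distinct (cols X)"
  proof (rule ccontr)
    assume nd: "\<not> distinct (cols X)"
    obtain S where S: "maximal S (\<lambda>T. T \<subseteq> set (cols X) \<and> lin_indpt T)"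
      using maximal_exists[of "(\<lambda>T. T \<subseteq> set (cols X) \<and> lin_indpt T)" "card (set (cols X))" "{}"]
      by (meson List.finite_set card_mono empty_iff empty_subsetI finite_lin_indpt2 rev_finite_subset)
    then have "card S \<le> card (set (cols X))" by (simp add: card_mono maximal_def)
    also have "\<dots> < length (cols X)" using nd card_distinct by (metis card_length le_neq_implies_less)
    also have "\<dots> = nc" using X by simp
    finally have "card S < nc" .
    moreover have "rank X = card S" using rank_card_indpt[OF X S] .
    ultimately show False using r by simp
  qed
  have "lin_indpt (set (cols X))" using full_rank_lin_indpt[OF X r d] .
  moreover have "lin_dep (set (cols X))" using lin_depI[OF X v v0 z d] .
  ultimately show False by simp
qed

lemma krylov_carrier: "A \<in> carrier_mat n n \<Longrightarrow> f1 \<in> carrier_vec n \<Longrightarrow> krylov A f1 i \<in> carrier_vec n"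
  unfolding krylov_def by (metis mult_mat_vec_carrier pow_carrier_mat)

lemma pow_Suc_vec: assumes A: "A \<in> carrier_mat n n" and w: "w \<in> carrier_vec n"
  shows "A ^\<^sub>m (Suc i) *\<^sub>v w = A ^\<^sub>m i *\<^sub>v (A *\<^sub>v w)"
  using assoc_mult_mat_vec[OF pow_carrier_mat[OF A, of i] A w] by simp

lemma krylov_Suc: assumes A: "A \<in> carrier_mat n n" and f1: "f1 \<in> carrier_vec n"
  shows "krylov A f1 (Suc i) = A *\<^sub>v krylov A f1 i"
proof -
  have "\<And>v. v \<in> carrier_vec n \<Longrightarrow> A ^\<^sub>m (Suc i) *\<^sub>v v = A *\<^sub>v (A ^\<^sub>m i *\<^sub>v v)"
  proof (induction i)
    case 0
    then show ?case using A by simp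
  next
    case (Suc i)
    have Av: "A *\<^sub>v v \<in> carrier_vec n" using A Suc.prems by simp
    have "A ^\<^sub>m Suc (Suc i) *\<^sub>v v = A ^\<^sub>m (Suc i) *\<^sub>v (A *\<^sub>v v)"
      using pow_Suc_vec[OF A Suc.prems] .
    also have "\<dots> = A *\<^sub>v (A ^\<^sub>m i *\<^sub>v (A *\<^sub>v v))" using Suc.IH[OF Av] .
    also have "A ^\<^sub>m i *\<^sub>v (A *\<^sub>v v) = A ^\<^sub>m (Suc i) *\<^sub>v v"
      using pow_Suc_vec[OF A Suc.prems] by simp
    finally show ?case .
  qed
  thus ?thesis unfolding krylov_def using f1 by simp
qed

lemma X_carrier: "krylov_mat n A f1 m \<in> carrier_mat n m"
  unfolding krylov_mat_def using mat_of_cols_carrier[of n "map (krylov A f1) [0..<m]"] by simp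

lemma X_index: "a < n \<Longrightarrow> i < m \<Longrightarrow> krylov_mat n A f1 m $$ (a, i) = krylov A f1 i $ a"
  unfolding krylov_mat_def by (simp add: mat_of_cols_index)

lemma X_mult: assumes "y \<in> carrier_vec m" "a < n"
  shows "(krylov_mat n A f1 m *\<^sub>v y) $ a = (\<Sum>i<m. krylov A f1 i $ a * y $ i)"
  using assms X_carrier[of n A f1 m] by (simp add: scalar_prod_def atLeast0LessThan X_index)

lemma companion_mult: assumes i: "i < m" and v: "v \<in> carrier_vec m"
  shows "(companion m c *\<^sub>v v) $ i = c $ i * v $ (m - 1) + (if 0 < i then v $ (i - 1) else 0)"
proof -
  have "(companion m c *\<^sub>v v) $ i = (\<Sum>j<m. (if j = m - 1 then c $ i else if i = j + 1 then 1 else 0) * v $ j)"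
    using i v unfolding companion_def by (simp add: scalar_prod_def atLeast0LessThan)
  also have "\<dots> = (\<Sum>j<m. (if j = m - 1 then c $ i * v $ j else 0) + (if 0 < i \<and> j = i - 1 then v $ j else 0))"
    using i by (intro sum.cong refl) auto
  also have "\<dots> = c $ i * v $ (m - 1) + (if 0 < i then v $ (i - 1) else 0)"
    using i by (simp add: sum.distrib)
  finally show ?thesis .
qed

lemma companion_eig: assumes m: "m \<ge> 1" and e: "eigenvalue (companion m c) l"
  shows "l ^ m = (\<Sum>i<m. c $ i * l ^ i)"
proof -
  have dr: "dim_row (companion m c) = m" unfolding companion_def by simp
  obtain v where v: "v \<in> carrier_vec m" "v \<noteq> 0\<^sub>v m" "companion m c *\<^sub>v v = l \<cdot>\<^sub>v v"
    using e unfolding eigenvalue_def eigenvector_def dr by blast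
  have eq: "l * v $ i = c $ i * v $ (m - 1) + (if 0 < i then v $ (i - 1) else 0)" if "i < m" for i
  proof -
    have "l * v $ i = (companion m c *\<^sub>v v) $ i" using v that by simp
    thus ?thesis using companion_mult[OF that v(1)] by simp
  qed
  obtain M where M: "m = Suc M" using m by (cases m) auto
  have vM: "v $ M \<noteq> 0"
  proof
    assume vM0: "v $ M = 0"
    have eq0: "l * v $ i = (if 0 < i then v $ (i - 1) else 0)" if "i < m" for i
      using eq[OF that] vM0 M by simp
    have "\<forall>i<m. v $ i = 0"
    proof (cases "l = 0")
      case True
      show ?thesis
      proof (intro allI impI)
        fix i assume i: "i < m"
        show "v $ i = 0"
        proof (cases "i = M")
          case True thus ?thesis using vM0 by simp
        next
          case False
          hence "Suc i < m" using i M by simp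
          from eq0[OF this] show ?thesis using \<open>l = 0\<close> by simp
        qed
      qed
    next
      case False
      show ?thesis
      proof (intro allI impI)
        fix i assume "i < m"
        thus "v $ i = 0"
        proof (induction i)
          case 0 thus ?case using eq0[OF 0] False by simp
        next
          case (Suc i)
          hence "v $ i = 0" by simp
          thus ?case using eq0[OF Suc.prems] False by simp
        qed
      qed
    qed
    hence "v = 0\<^sub>v m" using v(1) by (intro eq_vecI) auto
    thus False using v(2) by simp
  qed
  have "(\<Sum>i<m. l ^ i * (l * v $ i)) = (\<Sum>i<m. l ^ i * (c $ i * v $ (m - 1)) + l ^ i * (if 0 < i then v $ (i - 1) else 0))"
    using eq by (intro sum.cong refl) (simp add: distrib_left)
  also have "\<dots> = v $ M * (\<Sum>i<m. c $ i * l ^ i) + (\<Sum>i<M. l ^ Suc i * v $ i)"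
  proof -
    have a: "(\<Sum>i<m. l ^ i * (c $ i * v $ (m - 1))) = v $ M * (\<Sum>i<m. c $ i * l ^ i)"
      unfolding sum_distrib_left M diff_Suc_1 by (intro sum.cong refl) (simp add: mult_ac)
    have b: "(\<Sum>i<m. l ^ i * (if 0 < i then v $ (i - 1) else 0)) = (\<Sum>i<M. l ^ Suc i * v $ i)"
      unfolding M sum.lessThan_Suc_shift by simp
    show ?thesis unfolding sum.distrib a b ..
  qed
  finally have "(\<Sum>i<M. l ^ Suc i * v $ i) + l ^ m * v $ M = v $ M * (\<Sum>i<m. c $ i * l ^ i) + (\<Sum>i<M. l ^ Suc i * v $ i)"
    unfolding M sum.lessThan_Suc by (simp add: mult_ac)
  hence "l ^ m * v $ M = (\<Sum>i<m. c $ i * l ^ i) * v $ M" by (simp add: mult_ac)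
  thus ?thesis using vM by simp
qed

definition cpoly :: "nat \<Rightarrow> complex vec \<Rightarrow> complex poly" where
  "cpoly m c = monom 1 m - (\<Sum>i<m. monom (c $ i) i)"

lemma cpoly_coeff: "coeff (cpoly m c) k = (if k = m then 1 else 0) - (if k < m then c $ k else 0)"
  unfolding cpoly_def by (simp add: coeff_sum coeff_monom)

lemma cpoly_poly: "poly (cpoly m c) x = x ^ m - (\<Sum>i<m. c $ i * x ^ i)"
  unfolding cpoly_def by (simp add: poly_sum poly_monom)

definition omega :: "nat \<Rightarrow> (nat \<Rightarrow> complex) \<Rightarrow> complex poly" where
  "omega m lam = (\<Prod>k<m. [:- lam k, 1:])"

lemma omega_deg: "degree (omega m lam) = m"
  unfolding omega_def by (subst degree_prod_eq_sum_degree) auto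

lemma omega_coeff: "coeff (omega m lam) m = 1"
proof -
  have "coeff (omega m lam) m = lead_coeff (omega m lam)" using omega_deg by simp
  also have "\<dots> = 1" unfolding omega_def lead_coeff_prod by simp
  finally show ?thesis .
qed

lemma omega_cpoly:
  assumes m: "m \<ge> 1" and eig: "\<forall>i<m. eigenvalue (companion m c) (lam i)"
    and inj: "inj_on lam {..<m}"
  shows "omega m lam = cpoly m c"
proof (rule poly_eqI_degree_lead_coeff[of _ m _ "lam ` {..<m}"])
  show "coeff (omega m lam) m = coeff (cpoly m c) m" using omega_coeff cpoly_coeff by simp
  show "m \<le> card (lam ` {..<m})" using card_image[OF inj] by simp
  show "degree (omega m lam) \<le> m" using omega_deg by simp
  show "degree (cpoly m c) \<le> m" by (rule degree_le) (simp add: cpoly_coeff)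
  fix z assume "z \<in> lam ` {..<m}"
  then obtain k where k: "k < m" "z = lam k" by auto
  have "poly (omega m lam) z = 0" unfolding omega_def poly_prod using k
    by (intro prod_zero) auto
  moreover have "poly (cpoly m c) z = 0" unfolding cpoly_poly
    using companion_eig[OF m, of c "lam k"] eig k by simp
  ultimately show "poly (omega m lam) z = poly (cpoly m c) z" by simp
qed

definition pij :: "nat \<Rightarrow> (nat \<Rightarrow> complex) \<Rightarrow> nat \<Rightarrow> complex" where
  "pij m lam j = (\<Prod>k\<in>{..<m}-{j}. (lam j - lam k))"

definition lag :: "nat \<Rightarrow> (nat \<Rightarrow> complex) \<Rightarrow> nat \<Rightarrow> complex poly" where
  "lag m lam j = Polynomial.smult (1 / pij m lam j) (\<Prod>k\<in>{..<m}-{j}. [:- lam k, 1:])"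

definition Bm :: "nat \<Rightarrow> (nat \<Rightarrow> complex) \<Rightarrow> complex mat" where
  "Bm m lam = mat m m (\<lambda>(i, j). coeff (lag m lam j) i)"

lemma pij_nz: assumes "inj_on lam {..<m}" "j < m" shows "pij m lam j \<noteq> 0"
  unfolding pij_def using assms by (auto simp: inj_on_def)

lemma lag_deg: assumes "j < m" shows "degree (lag m lam j) < m"
proof -
  have "degree (lag m lam j) \<le> degree (\<Prod>k\<in>{..<m}-{j}. [:- lam k, 1:])"
    unfolding lag_def by (rule degree_smult_le)
  also have "\<dots> \<le> sum (degree \<circ> (\<lambda>k. [:- lam k, 1:])) ({..<m}-{j})"
    by (rule degree_prod_sum_le) simp
  also have "\<dots> = card ({..<m}-{j})" by simp
  also have "\<dots> < m" using assms by simp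
  finally show ?thesis .
qed

lemma lag_poly: assumes inj: "inj_on lam {..<m}" and j: "j < m" and k: "k < m"
  shows "poly (lag m lam j) (lam k) = (if k = j then 1 else 0)"
proof -
  have "poly (lag m lam j) (lam k) = (\<Prod>l\<in>{..<m}-{j}. (lam k - lam l)) / pij m lam j"
    unfolding lag_def by (simp add: poly_prod)
  thus ?thesis using pij_nz[OF inj j] k unfolding pij_def by auto
qed

lemma lag_omega: assumes j: "j < m"
  shows "[:- lam j, 1:] * lag m lam j = Polynomial.smult (1 / pij m lam j) (omega m lam)"
proof -
  have "omega m lam = [:- lam j, 1:] * (\<Prod>k\<in>{..<m}-{j}. [:- lam k, 1:])"
    unfolding omega_def using j by (subst prod.remove[of _ j]) auto
  thus ?thesis unfolding lag_def by (simp add: mult_smult_right)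
qed

lemma poly_sum_lt: fixes p :: "complex poly" assumes "degree p < N" shows "poly p x = (\<Sum>i<N. coeff p i * x ^ i)"
proof -
  have "poly p x = (\<Sum>i\<le>degree p. coeff p i * x ^ i)" by (rule Polynomial.poly_altdef)
  also have "\<dots> = (\<Sum>i<N. coeff p i * x ^ i)"
    using assms by (intro sum.mono_neutral_left) (auto simp: coeff_eq_0)
  finally show ?thesis .
qed

lemma V_Bm: assumes inj: "inj_on lam {..<m}"
  shows "vandermonde m lam * Bm m lam = 1\<^sub>m m"
proof (rule eq_matI)
  fix k j assume "k < dim_row (1\<^sub>m m :: complex mat)" "j < dim_col (1\<^sub>m m :: complex mat)"
  hence k: "k < m" and j: "j < m" by auto
  have "(vandermonde m lam * Bm m lam) $$ (k, j) = (\<Sum>i<m. coeff (lag m lam j) i * lam k ^ i)"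
    using k j unfolding vandermonde_def Bm_def
    by (simp add: scalar_prod_def atLeast0LessThan mult.commute)
  also have "\<dots> = poly (lag m lam j) (lam k)" using poly_sum_lt[OF lag_deg[OF j]] by simp
  also have "\<dots> = 1\<^sub>m m $$ (k, j)" using lag_poly[OF inj j k] k j by simp
  finally show "(vandermonde m lam * Bm m lam) $$ (k, j) = 1\<^sub>m m $$ (k, j)" .
qed (auto simp: vandermonde_def Bm_def)

lemma mat_inv_V: assumes inj: "inj_on lam {..<m}"
  shows "mat_inv (vandermonde m lam) = Bm m lam"
proof -
  have V: "vandermonde m lam \<in> carrier_mat m m" unfolding vandermonde_def by simp
  have B: "Bm m lam \<in> carrier_mat m m" unfolding Bm_def by simp
  have VB: "vandermonde m lam * Bm m lam = 1\<^sub>m m" using V_Bm[OF inj] .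
  have BV: "Bm m lam * vandermonde m lam = 1\<^sub>m m" using mat_mult_left_right_inverse[OF V B VB] .
  have dr: "dim_row (vandermonde m lam) = m" using V by simp
  show ?thesis unfolding mat_inv_def dr
  proof (rule the_equality)
    show "Bm m lam \<in> carrier_mat m m \<and> inverts_mat (vandermonde m lam) (Bm m lam) \<and> inverts_mat (Bm m lam) (vandermonde m lam)"
      using B VB BV unfolding inverts_mat_def using V B by simp
    fix B' assume "B' \<in> carrier_mat m m \<and> inverts_mat (vandermonde m lam) B' \<and> inverts_mat B' (vandermonde m lam)"
    hence B': "B' \<in> carrier_mat m m" and B'V: "B' * vandermonde m lam = 1\<^sub>m m"
      unfolding inverts_mat_def by auto
    have "B' = B' * (vandermonde m lam * Bm m lam)" using VB B' by simp
    also have "\<dots> = (B' * vandermonde m lam) * Bm m lam" using assoc_mult_mat[OF B' V B] by simp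
    also have "\<dots> = Bm m lam" using B'V B by simp
    finally show "B' = Bm m lam" .
  qed
qed

definition kv :: "nat \<Rightarrow> complex mat \<Rightarrow> complex vec \<Rightarrow> nat \<Rightarrow> complex poly \<Rightarrow> complex vec" where
  "kv n A f1 N p = vec n (\<lambda>a. \<Sum>i<N. coeff p i * krylov A f1 i $ a)"

lemma kv_carrier: "kv n A f1 N p \<in> carrier_vec n" unfolding kv_def by simp

lemma kv_dim[simp]: "dim_vec (kv n A f1 N p) = n" unfolding kv_def by simp

lemma kv_smult: "kv n A f1 N (Polynomial.smult s p) = s \<cdot>\<^sub>v kv n A f1 N p"
  unfolding kv_def by (intro eq_vecI) (auto simp: sum_distrib_left mult_ac)

lemma kv_shift:
  assumes A: "A \<in> carrier_mat n n" and f1: "f1 \<in> carrier_vec n" and d: "degree p < m"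
  shows "A *\<^sub>v kv n A f1 (Suc m) p - l \<cdot>\<^sub>v kv n A f1 (Suc m) p = kv n A f1 (Suc m) ([:- l, 1:] * p)"
proof (rule eq_vecI)
  fix a assume "a < dim_vec (kv n A f1 (Suc m) ([:- l, 1:] * p))"
  hence a: "a < n" unfolding kv_def by simp
  have fi: "\<And>i. krylov A f1 i \<in> carrier_vec n" using krylov_carrier[OF A f1] .
  have cm: "coeff p m = 0" using d by (simp add: coeff_eq_0)
  have "(A *\<^sub>v kv n A f1 (Suc m) p) $ a = (\<Sum>b<n. A $$ (a,b) * (\<Sum>i<Suc m. coeff p i * krylov A f1 i $ b))"
    using A a unfolding kv_def by (simp add: scalar_prod_def atLeast0LessThan)
  also have "\<dots> = (\<Sum>i<Suc m. coeff p i * (\<Sum>b<n. A $$ (a,b) * krylov A f1 i $ b))"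
  proof -
    have "(\<Sum>b<n. A $$ (a,b) * (\<Sum>i<Suc m. coeff p i * krylov A f1 i $ b)) =
       (\<Sum>b<n. \<Sum>i<Suc m. A $$ (a,b) * (coeff p i * krylov A f1 i $ b))"
      by (simp only: sum_distrib_left)
    also have "\<dots> = (\<Sum>i<Suc m. \<Sum>b<n. A $$ (a,b) * (coeff p i * krylov A f1 i $ b))"
      by (rule sum.swap)
    also have "\<dots> = (\<Sum>i<Suc m. coeff p i * (\<Sum>b<n. A $$ (a,b) * krylov A f1 i $ b))"
      by (simp only: sum_distrib_left mult.left_commute)
    finally show ?thesis .
  qed
  also have "\<dots> = (\<Sum>i<Suc m. coeff p i * krylov A f1 (Suc i) $ a)"
  proof (intro sum.cong refl)
    fix i
    have "krylov A f1 (Suc i) $ a = (A *\<^sub>v krylov A f1 i) $ a" using krylov_Suc[OF A f1] by simp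
    also have "\<dots> = (\<Sum>b<n. A $$ (a,b) * krylov A f1 i $ b)"
      using A a fi[of i] by (simp add: scalar_prod_def atLeast0LessThan)
    finally show "coeff p i * (\<Sum>b<n. A $$ (a,b) * krylov A f1 i $ b) = coeff p i * krylov A f1 (Suc i) $ a" by simp
  qed
  also have "\<dots> = (\<Sum>i<m. coeff p i * krylov A f1 (Suc i) $ a)" using cm by simp
  finally have e1: "(A *\<^sub>v kv n A f1 (Suc m) p) $ a = (\<Sum>i<m. coeff p i * krylov A f1 (Suc i) $ a)" .
  have "kv n A f1 (Suc m) ([:- l, 1:] * p) $ a = (\<Sum>i<Suc m. coeff ([:- l, 1:] * p) i * krylov A f1 i $ a)"
    using a unfolding kv_def by simp
  also have "\<dots> = (\<Sum>i<Suc m. (- l * coeff p i) * krylov A f1 i $ a + coeff (pCons 0 p) i * krylov A f1 i $ a)"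
    by (intro sum.cong refl) (simp add: distrib_right left_diff_distrib)
  also have "\<dots> = (\<Sum>i<Suc m. (- l * coeff p i) * krylov A f1 i $ a) + (\<Sum>i<m. coeff p i * krylov A f1 (Suc i) $ a)"
    unfolding sum.distrib by (simp add: sum.lessThan_Suc_shift del: sum.lessThan_Suc)
  finally have e2: "kv n A f1 (Suc m) ([:- l, 1:] * p) $ a = (\<Sum>i<Suc m. (- l * coeff p i) * krylov A f1 i $ a) + (\<Sum>i<m. coeff p i * krylov A f1 (Suc i) $ a)" .
  have e3: "(l \<cdot>\<^sub>v kv n A f1 (Suc m) p) $ a = (\<Sum>i<Suc m. l * coeff p i * krylov A f1 i $ a)"
    using a unfolding kv_def by (simp add: sum_distrib_left mult_ac del: sum.lessThan_Suc)
  show "(A *\<^sub>v kv n A f1 (Suc m) p - l \<cdot>\<^sub>v kv n A f1 (Suc m) p) $ a = kv n A f1 (Suc m) ([:- l, 1:] * p) $ a"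
  proof -
    have "(A *\<^sub>v kv n A f1 (Suc m) p - l \<cdot>\<^sub>v kv n A f1 (Suc m) p) $ a = 
       (A *\<^sub>v kv n A f1 (Suc m) p) $ a - (l \<cdot>\<^sub>v kv n A f1 (Suc m) p) $ a"
      using a by (intro index_minus_vec(1)) simp
    thus ?thesis unfolding e1 e2 e3 by (simp add: sum_negf del: sum.lessThan_Suc)
  qed
qed (simp add: kv_def)

lemma kv_cpoly: assumes c: "c \<in> carrier_vec m"
  shows "kv n A f1 (Suc m) (cpoly m c) = krylov A f1 m - krylov_mat n A f1 m *\<^sub>v c"
proof (rule eq_vecI)
  fix a assume "a < dim_vec (krylov A f1 m - krylov_mat n A f1 m *\<^sub>v c)"
  hence a: "a < n" using X_carrier[of n A f1 m] by simp
  have "kv n A f1 (Suc m) (cpoly m c) $ a = (\<Sum>i<Suc m. ((if i = m then 1 else 0) - (if i < m then c $ i else 0)) * krylov A f1 i $ a)"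
    using a unfolding kv_def cpoly_coeff by simp
  also have "\<dots> = krylov A f1 m $ a - (\<Sum>i<m. krylov A f1 i $ a * c $ i)"
    by (simp add: mult.commute sum_negf)
  also have "\<dots> = (krylov A f1 m - krylov_mat n A f1 m *\<^sub>v c) $ a"
    using a X_mult[OF c a, of A f1] X_carrier[of n A f1 m] by simp
  finally show "kv n A f1 (Suc m) (cpoly m c) $ a = (krylov A f1 m - krylov_mat n A f1 m *\<^sub>v c) $ a" .
qed (insert X_carrier[of n A f1 m], simp add: kv_def)

lemma col_Bm: "j < m \<Longrightarrow> col (Bm m lam) j = vec m (\<lambda>i. coeff (lag m lam j) i)"
  unfolding Bm_def by (intro eq_vecI) auto

lemma col_W: assumes j: "j < m"
  shows "krylov_mat n A f1 m *\<^sub>v col (Bm m lam) j = kv n A f1 (Suc m) (lag m lam j)"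
proof (rule eq_vecI)
  fix a assume "a < dim_vec (kv n A f1 (Suc m) (lag m lam j))"
  hence a: "a < n" by simp
  have cm: "coeff (lag m lam j) m = 0" using lag_deg[OF j] by (simp add: coeff_eq_0)
  have "(krylov_mat n A f1 m *\<^sub>v col (Bm m lam) j) $ a = (\<Sum>i<m. krylov A f1 i $ a * coeff (lag m lam j) i)"
    using X_mult[of "col (Bm m lam) j" m a n A f1] a j unfolding col_Bm[OF j] by simp
  also have "\<dots> = kv n A f1 (Suc m) (lag m lam j) $ a" unfolding kv_def using a cm by (simp add: mult.commute)
  finally show "(krylov_mat n A f1 m *\<^sub>v col (Bm m lam) j) $ a = kv n A f1 (Suc m) (lag m lam j) $ a" .
qed (insert X_carrier[of n A f1 m], simp)

lemma vnorm2_smult: "vnorm2 (s \<cdot>\<^sub>v v) = cmod s * vnorm2 v"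
proof -
  have "vnorm2 (s \<cdot>\<^sub>v v) = sqrt ((cmod s)\<^sup>2 * (\<Sum>i<dim_vec v. (cmod (v $ i))\<^sup>2))"
    unfolding vnorm2_def by (simp add: norm_mult power_mult_distrib sum_distrib_left)
  also have "\<dots> = cmod s * vnorm2 v" unfolding vnorm2_def by (simp add: real_sqrt_mult)
  finally show ?thesis .
qed

lemma orth_gen:
  assumes r: "r \<in> carrier_vec n" and y: "y \<in> carrier_vec m"
    and orth: "\<And>i. i < m \<Longrightarrow> (\<Sum>a<n. cnj (krylov A f1 i $ a) * r $ a) = 0"
  shows "(s \<cdot>\<^sub>v r) \<bullet>c (krylov_mat n A f1 m *\<^sub>v y) = 0"
proof -
  let ?X = "krylov_mat n A f1 m"
  have X: "?X \<in> carrier_mat n m" by (rule X_carrier)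
  have "(s \<cdot>\<^sub>v r) \<bullet>c (?X *\<^sub>v y) = (\<Sum>a<n. (s * r $ a) * cnj ((?X *\<^sub>v y) $ a))"
    using r X y by (simp add: scalar_prod_def atLeast0LessThan conjugate_complex_def)
  also have "\<dots> = (\<Sum>a<n. (s * r $ a) * cnj (\<Sum>i<m. krylov A f1 i $ a * y $ i))"
    using X_mult[OF y] by simp
  also have "\<dots> = (\<Sum>a<n. \<Sum>i<m. s * cnj (y $ i) * (cnj (krylov A f1 i $ a) * r $ a))"
    by (simp add: sum_distrib_left mult_ac)
  also have "\<dots> = (\<Sum>i<m. \<Sum>a<n. s * cnj (y $ i) * (cnj (krylov A f1 i $ a) * r $ a))"
    by (rule sum.swap)
  also have "\<dots> = (\<Sum>i<m. s * cnj (y $ i) * (\<Sum>a<n. cnj (krylov A f1 i $ a) * r $ a))"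
    by (simp only: sum_distrib_left)
  also have "\<dots> = 0" using orth by simp
  finally show ?thesis .
qed

theorem mainTheorem1:
  fixes A :: "complex mat" and f1 :: "complex vec" and n m :: nat
    and lam :: "nat \<Rightarrow> complex"
  assumes A: "A \<in> carrier_mat n n"
    and f1: "f1 \<in> carrier_vec n"
    and m_pos: "m \<ge> 1"
    and full_rank: "vec_space.rank n (krylov_mat n A f1 m) = m"
    and eig: "\<forall>i<m. eigenvalue (companion m (pinv (krylov_mat n A f1 m) *\<^sub>v krylov A f1 m)) (lam i)"
    and distinct: "inj_on lam {..<m}"
  shows "let X = krylov_mat n A f1 m;
             c = pinv X *\<^sub>v krylov A f1 m;
             r = krylov A f1 m - X *\<^sub>v c;
             W = X * mat_inv (vandermonde m lam)
         in \<forall>j<m. ritz_pair A (col_space X) (lam j) (col W j) \<and>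
              vnorm2 (A *\<^sub>v col W j - lam j \<cdot>\<^sub>v col W j) / vnorm2 (col W j)
                = vnorm2 r / vnorm2 (col W j) * (\<Prod>k\<in>{..<m} - {j}. 1 / cmod (lam j - lam k))"
proof -
  define X where "X = krylov_mat n A f1 m"
  define Y where "Y = pinv X"
  define fm where "fm = krylov A f1 m"
  define c where "c = Y *\<^sub>v fm"
  define r where "r = fm - X *\<^sub>v c"
  define W where "W = X * mat_inv (vandermonde m lam)"
  have Xc: "X \<in> carrier_mat n m" unfolding X_def by (rule X_carrier)
  have inj: "\<And>v. v \<in> carrier_vec m \<Longrightarrow> X *\<^sub>v v = 0\<^sub>v n \<Longrightarrow> v = 0\<^sub>v m"
    using vec_space.rank_inj[OF Xc full_rank[folded X_def]] by blast
  from pinv_prop[OF Xc inj] have Yc: "Y \<in> carrier_mat m n" and XXY: "mat_adjoint X * X * Y = mat_adjoint X"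
    unfolding Y_def by auto
  have XH: "mat_adjoint X \<in> carrier_mat m n" using adj_carrier[OF Xc] .
  have fmc: "fm \<in> carrier_vec n" unfolding fm_def using krylov_carrier[OF A f1] .
  have cc: "c \<in> carrier_vec m" unfolding c_def using Yc fmc by simp
  have rc: "r \<in> carrier_vec n" unfolding r_def using fmc Xc cc by simp
  have "mat_adjoint X *\<^sub>v r = mat_adjoint X *\<^sub>v fm - mat_adjoint X *\<^sub>v (X *\<^sub>v (Y *\<^sub>v fm))"
    unfolding r_def c_def using XH fmc Xc Yc by (intro mult_minus_distrib_mat_vec) auto
  also have "mat_adjoint X *\<^sub>v (X *\<^sub>v (Y *\<^sub>v fm)) = (mat_adjoint X * X * Y) *\<^sub>v fm"
  proof -
    have Yf: "Y *\<^sub>v fm \<in> carrier_vec m" using Yc fmc by simp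
    have "(mat_adjoint X * X * Y) *\<^sub>v fm = (mat_adjoint X * X) *\<^sub>v (Y *\<^sub>v fm)"
      using assoc_mult_mat_vec[OF mult_carrier_mat[OF XH Xc] Yc fmc] .
    also have "\<dots> = mat_adjoint X *\<^sub>v (X *\<^sub>v (Y *\<^sub>v fm))"
      using assoc_mult_mat_vec[OF XH Xc Yf] .
    finally show ?thesis by simp
  qed
  also have "\<dots> = mat_adjoint X *\<^sub>v fm" unfolding XXY ..
  finally have XHr: "mat_adjoint X *\<^sub>v r = 0\<^sub>v m" using XH fmc by simp
  have orth: "(\<Sum>a<n. cnj (krylov A f1 i $ a) * r $ a) = 0" if i: "i < m" for i
  proof -
    have "0 = (mat_adjoint X *\<^sub>v r) $ i" unfolding XHr using i by simp
    also have "\<dots> = (\<Sum>a<n. cnj (X $$ (a, i)) * r $ a)"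
      using i Xc rc by (simp add: scalar_prod_def atLeast0LessThan)
    also have "\<dots> = (\<Sum>a<n. cnj (krylov A f1 i $ a) * r $ a)"
      unfolding X_def using i by (intro sum.cong refl) (simp add: X_index)
    finally show ?thesis by simp
  qed
  have om: "omega m lam = cpoly m c"
    using omega_cpoly[OF m_pos _ distinct] eig unfolding c_def Y_def X_def fm_def by blast
  have Minv: "mat_inv (vandermonde m lam) = Bm m lam" using mat_inv_V[OF distinct] .
  have Bc: "Bm m lam \<in> carrier_mat m m" unfolding Bm_def by simp
  have kr: "kv n A f1 (Suc m) (cpoly m c) = r" unfolding r_def fm_def X_def using kv_cpoly[OF cc] .
  have main: "ritz_pair A (col_space X) (lam j) (col W j) \<and>
              vnorm2 (A *\<^sub>v col W j - lam j \<cdot>\<^sub>v col W j) / vnorm2 (col W j)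
                = vnorm2 r / vnorm2 (col W j) * (\<Prod>k\<in>{..<m} - {j}. 1 / cmod (lam j - lam k))"
    if j: "j < m" for j
  proof -
    define s where "s = 1 / pij m lam j"
    have colB: "col (Bm m lam) j \<in> carrier_vec m" using Bc j by simp
    have wX: "col W j = X *\<^sub>v col (Bm m lam) j" unfolding W_def Minv by (rule col_mult2[OF Xc Bc j])
    have wk: "col W j = kv n A f1 (Suc m) (lag m lam j)" unfolding wX X_def using col_W[OF j] .
    have diff: "A *\<^sub>v col W j - lam j \<cdot>\<^sub>v col W j = s \<cdot>\<^sub>v r"
      unfolding wk kv_shift[OF A f1 lag_deg[OF j]] lag_omega[OF j] om kv_smult kr s_def ..
    have inK: "col W j \<in> col_space X" unfolding col_space_def wX using colB Xc by auto
    have nz: "col W j \<noteq> 0\<^sub>v (dim_vec (col W j))"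
    proof
      assume "col W j = 0\<^sub>v (dim_vec (col W j))"
      hence "X *\<^sub>v col (Bm m lam) j = 0\<^sub>v n" unfolding wX using Xc by simp
      hence "col (Bm m lam) j = 0\<^sub>v m" using inj colB by blast
      hence cz: "\<And>i. i < m \<Longrightarrow> coeff (lag m lam j) i = 0"
        unfolding col_Bm[OF j] by (metis index_vec index_zero_vec(1))
      have "lead_coeff (lag m lam j) = 0" using cz lag_deg[OF j] by simp
      hence "lag m lam j = 0" by simp
      thus False using lag_poly[OF distinct j j] by simp
    qed
    have ort: "\<forall>u\<in>col_space X. (A *\<^sub>v col W j - lam j \<cdot>\<^sub>v col W j) \<bullet>c u = 0"
    proof
      fix u assume "u \<in> col_space X"
      then obtain y where y: "y \<in> carrier_vec m" and u: "u = X *\<^sub>v y"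
        unfolding col_space_def using Xc by auto
      show "(A *\<^sub>v col W j - lam j \<cdot>\<^sub>v col W j) \<bullet>c u = 0"
        unfolding diff u X_def using orth_gen[OF rc y orth] by blast
    qed
    have ritz: "ritz_pair A (col_space X) (lam j) (col W j)"
      unfolding ritz_pair_def using inK nz ort by blast
    have cs: "cmod s = (\<Prod>k\<in>{..<m} - {j}. 1 / cmod (lam j - lam k))"
      unfolding s_def pij_def by (simp add: norm_divide prod_norm[symmetric] prod_dividef)
    have "vnorm2 (A *\<^sub>v col W j - lam j \<cdot>\<^sub>v col W j) / vnorm2 (col W j)
          = vnorm2 r / vnorm2 (col W j) * (\<Prod>k\<in>{..<m} - {j}. 1 / cmod (lam j - lam k))"
      unfolding diff vnorm2_smult cs[symmetric] by simp
    thus ?thesis using ritz by blast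
  qed
  show ?thesis unfolding Let_def X_def[symmetric] fm_def[symmetric] Y_def[symmetric] c_def[symmetric]
    r_def[symmetric] W_def[symmetric] using main by blast
qed

end
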